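(* Let $H$ be a binary tree based graph, $M$ a pseudomatching of $H$, and $S$ a set of literals with $Vars(S)=V(H)\setminus\bigcup M$ that is $1$-comfortable w.r.t. $M$. Then for every $S'\in{\bf EC}(S)$, $\Pr(\{S'\})=(1/2)^{|V(H)\setminus Fix(S)|}$.
   Context: Sets of literals never contain a variable together with its negation; $Vars(S)$ is the set of variables occurring in $S$. A rooted tree is extended if none of its leaves has a sibling. A graph $H$ is a binary tree based graph if it is the edge-disjoint union of extended rooted trees $T_1,\dots,T_m$ with roots $t_1,\dots,t_m$ such that every leaf of some $T_i$ is a leaf of exactly two of the trees, and any two trees have at most one common vertex, which is a leaf of both. Vertices are root vertices, leaf vertices, and internal vertices (the rest); two internal vertices are siblings if they are siblings in the tree containing them. $T_i,T_j$ are adjacent if they share a leaf $\ell_{i,j}$; $P_{i,j}$ is the path between $t_i$ and $t_j$ in $T_i\cup T_j$. A pseudoedge is a pair $\{t_i,t_j\}$ with $T_i,T_j$ adjacent; a pseudomatching is a set of pairwise disjoint pseudoedges; $\bigcup M$ is the set of their ends. $\phi_H$ is the CNF on variables $V(H)$ with a clause $C_{i,j}$ (positive literals of $V(P_{i,j})$) for each pseudoedge. $S$ falsifies a clause if all its variables occur negatively in $S$. $S$ respects $\{t_i,t_j\}$ if all non-root variables of $C_{i,j}$ occur negatively in $S$ and the siblings of all internal variables of $C_{i,j}$ occur positively in $S$. $S$ is $1$-comfortable w.r.t. $M$ if it falsifies no clause of $\phi_H$ and respects every pseudoedge of $M$. The positive literal $\ell_{i,j}$ is fixed w.r.t. a set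 $S$ of literals if $\ell_{i,j}\in S$ and all other variables of $C_{i,j}$ occur negatively in $S$; $Fix(S)$ is the set of fixed literals. ${\bf SAT}(H)$ is the set of satisfying assignments of $\phi_H$; each $S'\in{\bf SAT}(H)$ has probability $(1/2)^{|V(H)\setminus Fix(S')|}$. ${\bf EC}(S)=\{S'\in{\bf SAT}(H):S\subseteq S'\}$. *)

theory Defs
  imports Complex_Main
begin

record 'v rtree =
  tverts :: "'v set"
  troot  :: 'v
  tpar   :: "'v \<Rightarrow> 'v"

definition rooted_tree :: "'v rtree \<Rightarrow> bool" where
  "rooted_tree T \<longleftrightarrow> finite (tverts T) \<and> troot T \<in> tverts T \<and>
     (\<forall>v \<in> tverts T - {troot T}. tpar T v \<in> tverts T) \<and>
     (\<forall>v \<in> tverts T. \<exists>n. (tpar T ^^ n) v = troot T)"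

definition tedges :: "'v rtree \<Rightarrow> 'v set set" where
  "tedges T = {{v, tpar T v} | v. v \<in> tverts T - {troot T}}"

definition tchildren :: "'v rtree \<Rightarrow> 'v \<Rightarrow> 'v set" where
  "tchildren T u = {v \<in> tverts T - {troot T}. tpar T v = u}"

definition tleaves :: "'v rtree \<Rightarrow> 'v set" where
  "tleaves T = {v \<in> tverts T - {troot T}. tchildren T v = {}}"

definition tsiblings :: "'v rtree \<Rightarrow> 'v \<Rightarrow> 'v \<Rightarrow> bool" where
  "tsiblings T u v \<longleftrightarrow> u \<in> tverts T - {troot T} \<and> v \<in> tverts T - {troot T} \<and>
     u \<noteq> v \<and> tpar T u = tpar T v"

definition extended_tree :: "'v rtree \<Rightarrow> bool" where
  "extended_tree T \<longleftrightarrow> rooted_tree T \<and> (\<forall>l \<in> tleaves T. \<forall>u. \<not> tsiblings T l u)"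

definition rpath :: "'v rtree \<Rightarrow> 'v \<Rightarrow> 'v set" where
  "rpath T v = {u. \<exists>k. u = (tpar T ^^ k) v \<and> (\<forall>l<k. (tpar T ^^ l) v \<noteq> troot T)}"

section \<open>Binary tree based graphs, given by their decomposition T 0, ..., T (m-1)\<close>

definition btb_graph :: "nat \<Rightarrow> (nat \<Rightarrow> 'v rtree) \<Rightarrow> bool" where
  "btb_graph m T \<longleftrightarrow>
     (\<forall>i<m. extended_tree (T i)) \<and>
     (\<forall>i<m. \<forall>j<m. i \<noteq> j \<longrightarrow> tedges (T i) \<inter> tedges (T j) = {}) \<and>
     (\<forall>i<m. \<forall>l \<in> tleaves (T i). card {j. j < m \<and> l \<in> tleaves (T j)} = 2) \<and>
     (\<forall>i<m. \<forall>j<m. i \<noteq> j \<longrightarrow>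
        card (tverts (T i) \<inter> tverts (T j)) \<le> 1 \<and>
        tverts (T i) \<inter> tverts (T j) \<subseteq> tleaves (T i) \<inter> tleaves (T j))"

definition HV :: "nat \<Rightarrow> (nat \<Rightarrow> 'v rtree) \<Rightarrow> 'v set" where
  "HV m T = (\<Union>i<m. tverts (T i))"

definition is_root :: "nat \<Rightarrow> (nat \<Rightarrow> 'v rtree) \<Rightarrow> 'v \<Rightarrow> bool" where
  "is_root m T v \<longleftrightarrow> (\<exists>i<m. v = troot (T i))"

definition is_leaf :: "nat \<Rightarrow> (nat \<Rightarrow> 'v rtree) \<Rightarrow> 'v \<Rightarrow> bool" where
  "is_leaf m T v \<longleftrightarrow> (\<exists>i<m. v \<in> tleaves (T i))"

definition is_internal :: "nat \<Rightarrow> (nat \<Rightarrow> 'v rtree) \<Rightarrow> 'v \<Rightarrow> bool" where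
  "is_internal m T v \<longleftrightarrow> v \<in> HV m T \<and> \<not> is_root m T v \<and> \<not> is_leaf m T v"

definition siblings :: "nat \<Rightarrow> (nat \<Rightarrow> 'v rtree) \<Rightarrow> 'v \<Rightarrow> 'v \<Rightarrow> bool" where
  "siblings m T u v \<longleftrightarrow> is_internal m T u \<and> is_internal m T v \<and>
     (\<exists>i<m. tsiblings (T i) u v)"

definition adjacent :: "nat \<Rightarrow> (nat \<Rightarrow> 'v rtree) \<Rightarrow> nat \<Rightarrow> nat \<Rightarrow> bool" where
  "adjacent m T i j \<longleftrightarrow> i < m \<and> j < m \<and> i \<noteq> j \<and>
     (\<exists>l. l \<in> tleaves (T i) \<and> l \<in> tleaves (T j))"

definition cleaf :: "(nat \<Rightarrow> 'v rtree) \<Rightarrow> nat \<Rightarrow> nat \<Rightarrow> 'v" where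
  "cleaf T i j = (THE l. l \<in> tleaves (T i) \<and> l \<in> tleaves (T j))"

text \<open>V(P_{i,j}): vertices of the path between t_i and t_j in T_i \<union> T_j (through l_{i,j})\<close>
definition Pvars :: "(nat \<Rightarrow> 'v rtree) \<Rightarrow> nat \<Rightarrow> nat \<Rightarrow> 'v set" where
  "Pvars T i j = rpath (T i) (cleaf T i j) \<union> rpath (T j) (cleaf T i j)"

definition pseudoedges :: "nat \<Rightarrow> (nat \<Rightarrow> 'v rtree) \<Rightarrow> 'v set set" where
  "pseudoedges m T = {{troot (T i), troot (T j)} | i j. adjacent m T i j}"

definition pseudomatching :: "nat \<Rightarrow> (nat \<Rightarrow> 'v rtree) \<Rightarrow> 'v set set \<Rightarrow> bool" where
  "pseudomatching m T M \<longleftrightarrow> M \<subseteq> pseudoedges m T \<and>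
     (\<forall>e\<in>M. \<forall>f\<in>M. e \<noteq> f \<longrightarrow> e \<inter> f = {})"

text \<open>the clauses of phi_H, each given by its (positive) variable set\<close>
definition clauses :: "nat \<Rightarrow> (nat \<Rightarrow> 'v rtree) \<Rightarrow> 'v set set" where
  "clauses m T = {Pvars T i j | i j. adjacent m T i j}"

type_synonym 'v lit = "'v \<times> bool"

definition consistent :: "'v lit set \<Rightarrow> bool" where
  "consistent S \<longleftrightarrow> (\<forall>v. \<not> ((v, True) \<in> S \<and> (v, False) \<in> S))"

definition Vars :: "'v lit set \<Rightarrow> 'v set" where
  "Vars S = fst ` S"

definition falsifies :: "'v lit set \<Rightarrow> 'v set \<Rightarrow> bool" where
  "falsifies S C \<longleftrightarrow> (\<forall>v\<in>C. (v, False) \<in> S)"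

definition respects_pe :: "nat \<Rightarrow> (nat \<Rightarrow> 'v rtree) \<Rightarrow> 'v lit set \<Rightarrow> 'v set \<Rightarrow> bool" where
  "respects_pe m T S e \<longleftrightarrow> (\<forall>i j. adjacent m T i j \<and> e = {troot (T i), troot (T j)} \<longrightarrow>
     (\<forall>v \<in> Pvars T i j. \<not> is_root m T v \<longrightarrow> (v, False) \<in> S) \<and>
     (\<forall>v \<in> Pvars T i j. is_internal m T v \<longrightarrow> (\<forall>u. siblings m T u v \<longrightarrow> (u, True) \<in> S)))"

definition comfortable1 :: "nat \<Rightarrow> (nat \<Rightarrow> 'v rtree) \<Rightarrow> 'v set set \<Rightarrow> 'v lit set \<Rightarrow> bool" where
  "comfortable1 m T M S \<longleftrightarrow> (\<forall>C \<in> clauses m T. \<not> falsifies S C) \<and> (\<forall>e\<in>M. respects_pe m T S e)"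

definition Fix :: "nat \<Rightarrow> (nat \<Rightarrow> 'v rtree) \<Rightarrow> 'v lit set \<Rightarrow> 'v lit set" where
  "Fix m T S = {(cleaf T i j, True) | i j. adjacent m T i j \<and> (cleaf T i j, True) \<in> S \<and>
       (\<forall>v \<in> Pvars T i j - {cleaf T i j}. (v, False) \<in> S)}"

definition SAT :: "nat \<Rightarrow> (nat \<Rightarrow> 'v rtree) \<Rightarrow> 'v lit set set" where
  "SAT m T = {S'. consistent S' \<and> Vars S' = HV m T \<and>
     (\<forall>C \<in> clauses m T. \<exists>v\<in>C. (v, True) \<in> S')}"

definition EC :: "nat \<Rightarrow> (nat \<Rightarrow> 'v rtree) \<Rightarrow> 'v lit set \<Rightarrow> 'v lit set set" where
  "EC m T S = {S' \<in> SAT m T. S \<subseteq> S'}"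

definition weight :: "nat \<Rightarrow> (nat \<Rightarrow> 'v rtree) \<Rightarrow> 'v lit set \<Rightarrow> real" where
  "weight m T S' = (1/2) ^ card (HV m T - Vars (Fix m T S'))"

definition Pr :: "nat \<Rightarrow> (nat \<Rightarrow> 'v rtree) \<Rightarrow> 'v lit set set \<Rightarrow> real" where
  "Pr m T A = (\<Sum>S'\<in>A \<inter> SAT m T. weight m T S')"

end

theory Submission imports Defs begin

lemma rpath_sub:
  assumes "rooted_tree T" "l \<in> tverts T"
  shows "rpath T l \<subseteq> tverts T"
proof
  fix u assume "u \<in> rpath T l"
  then obtain k where u: "u = (tpar T ^^ k) l" and nr: "\<forall>l'<k. (tpar T ^^ l') l \<noteq> troot T"
    unfolding rpath_def by blast
  have "\<forall>k'\<le>k. (tpar T ^^ k') l \<in> tverts T"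
  proof (intro allI impI)
    fix k' assume "k' \<le> k" then show "(tpar T ^^ k') l \<in> tverts T"
    proof (induction k')
      case 0 then show ?case using assms by simp
    next
      case (Suc k')
      then have "(tpar T ^^ k') l \<in> tverts T" "(tpar T ^^ k') l \<noteq> troot T" using nr by auto
      then show ?case using assms(1) unfolding rooted_tree_def by auto
    qed
  qed
  then show "u \<in> tverts T" using u by auto
qed

lemma rpath_memI: "(tpar T ^^ k) l = u \<Longrightarrow> \<forall>l'<k. (tpar T ^^ l') l \<noteq> troot T \<Longrightarrow> u \<in> rpath T l"
  unfolding rpath_def by auto

lemma root_in_rpath:
  assumes "rooted_tree T" "l \<in> tverts T"
  shows "troot T \<in> rpath T l"
proof -
  obtain n where n: "(tpar T ^^ n) l = troot T" using assms unfolding rooted_tree_def by blast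
  define k where "k = (LEAST n. (tpar T ^^ n) l = troot T)"
  have "(tpar T ^^ k) l = troot T" unfolding k_def by (rule LeastI[of _ n]) (rule n)
  moreover have "\<forall>l'<k. (tpar T ^^ l') l \<noteq> troot T" unfolding k_def using not_less_Least by blast
  ultimately show ?thesis by (rule rpath_memI)
qed

lemma self_in_rpath: "l \<in> rpath T l"
  unfolding rpath_def by (rule CollectI, rule exI[of _ 0]) simp

lemma diverge:
  assumes rt: "rooted_tree T" and l1: "l1 \<in> tleaves T" and l2: "l2 \<in> tleaves T" and ne: "l1 \<noteq> l2"
  shows "\<exists>x y. x \<in> rpath T l1 \<and> y \<in> rpath T l2 \<and> tsiblings T x y"
proof -
  let ?p = "tpar T"
  let ?q = "rpath T l2"
  have l1v: "l1 \<in> tverts T" "l1 \<noteq> troot T" and l2v: "l2 \<in> tverts T" "l2 \<noteq> troot T"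
    using l1 l2 unfolding tleaves_def by auto
  have rq: "troot T \<in> ?q" using root_in_rpath[OF rt l2v(1)] .
  have qv: "?q \<subseteq> tverts T" using rpath_sub[OF rt l2v(1)] .
  obtain n1 where n1: "(?p ^^ n1) l1 = troot T" using rt l1v unfolding rooted_tree_def by blast
  define k where "k = (LEAST k. (?p ^^ k) l1 \<in> ?q)"
  have kq: "(?p ^^ k) l1 \<in> ?q" unfolding k_def by (rule LeastI[of _ n1]) (simp add: n1 rq)
  have bel: "\<forall>l'<k. (?p ^^ l') l1 \<notin> ?q" unfolding k_def using not_less_Least by blast
  have belr: "\<forall>l'<k. (?p ^^ l') l1 \<noteq> troot T" using bel rq by metis
  \<comment> \<open>if some w in q has parent v, where v is a leaf, contradiction\<close>
  have noch: "\<And>v. v \<in> tleaves T \<Longrightarrow> v \<in> ?q \<Longrightarrow> v = l2"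
  proof -
    fix v assume vl: "v \<in> tleaves T" and vq: "v \<in> ?q"
    then obtain n where vn: "v = (?p ^^ n) l2" and nr: "\<forall>l'<n. (?p ^^ l') l2 \<noteq> troot T"
      unfolding rpath_def by blast
    show "v = l2"
    proof (cases n)
      case 0 then show ?thesis using vn by simp
    next
      case (Suc n')
      let ?w = "(?p ^^ n') l2"
      have "?w \<in> ?q" unfolding rpath_def using nr Suc by auto
      then have "?w \<in> tverts T" using qv by auto
      moreover have "?w \<noteq> troot T" using nr Suc by auto
      moreover have "?p ?w = v" using vn Suc by simp
      ultimately have "?w \<in> tchildren T v" unfolding tchildren_def by auto
      then show ?thesis using vl unfolding tleaves_def by auto
    qed
  qed
  have "k \<noteq> 0"
  proof
    assume "k = 0"
    then have "l1 \<in> ?q" using kq by simp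
    then show False using noch[OF l1] ne by simp
  qed
  then obtain k' where k': "k = Suc k'" by (cases k) auto
  let ?x = "(?p ^^ k') l1"
  have xp: "?x \<in> rpath T l1" unfolding rpath_def using belr k' by auto
  have xv: "?x \<in> tverts T" using rpath_sub[OF rt l1v(1)] xp by auto
  have xnq: "?x \<notin> ?q" using bel k' by auto
  have xnr: "?x \<noteq> troot T" using xnq rq by auto
  have pxq: "?p ?x \<in> ?q" using kq k' by simp
  then obtain n where pn: "?p ?x = (?p ^^ n) l2" and nr: "\<forall>l'<n. (?p ^^ l') l2 \<noteq> troot T"
    unfolding rpath_def by blast
  have "n \<noteq> 0"
  proof
    assume "n = 0"
    then have "?x \<in> tchildren T l2" using pn xv xnr unfolding tchildren_def by auto
    then show False using l2 unfolding tleaves_def by auto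
  qed
  then obtain n' where n': "n = Suc n'" by (cases n) auto
  let ?y = "(?p ^^ n') l2"
  have yq: "?y \<in> ?q" unfolding rpath_def using nr n' by auto
  have yv: "?y \<in> tverts T" using yq qv by auto
  have ynr: "?y \<noteq> troot T" using nr n' by auto
  have "?p ?y = ?p ?x" using pn n' by simp
  moreover have "?x \<noteq> ?y" using xnq yq by auto
  ultimately have "tsiblings T ?x ?y" unfolding tsiblings_def using xv xnr yv ynr by auto
  then show ?thesis using xp yq by blast
qed

lemma btb_ext: "btb_graph m T \<Longrightarrow> i < m \<Longrightarrow> extended_tree (T i)"
  unfolding btb_graph_def by auto

lemma btb_card2: "btb_graph m T \<Longrightarrow> i < m \<Longrightarrow> l \<in> tleaves (T i) \<Longrightarrow>
    card {j. j < m \<and> l \<in> tleaves (T j)} = 2"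
  unfolding btb_graph_def by auto

lemma btb_card1: "btb_graph m T \<Longrightarrow> i < m \<Longrightarrow> j < m \<Longrightarrow> i \<noteq> j \<Longrightarrow>
    card (tverts (T i) \<inter> tverts (T j)) \<le> 1"
  unfolding btb_graph_def by auto

lemma btb_shared: "btb_graph m T \<Longrightarrow> i < m \<Longrightarrow> j < m \<Longrightarrow> i \<noteq> j \<Longrightarrow>
    v \<in> tverts (T i) \<Longrightarrow> v \<in> tverts (T j) \<Longrightarrow> v \<in> tleaves (T i) \<and> v \<in> tleaves (T j)"
proof -
  assume g: "btb_graph m T" and ij: "i < m" "j < m" "i \<noteq> j" and v: "v \<in> tverts (T i)" "v \<in> tverts (T j)"
  from g have H: "\<forall>i<m. \<forall>j<m. i \<noteq> j \<longrightarrow>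
        card (tverts (T i) \<inter> tverts (T j)) \<le> 1 \<and>
        tverts (T i) \<inter> tverts (T j) \<subseteq> tleaves (T i) \<inter> tleaves (T j)"
    unfolding btb_graph_def by (elim conjE)
  then have "tverts (T i) \<inter> tverts (T j) \<subseteq> tleaves (T i) \<inter> tleaves (T j)" using ij by blast
  then show ?thesis using v by blast
qed

lemma G1:
  assumes "btb_graph m T" "a < m" "i < m" "a \<noteq> i" "v \<in> tverts (T i)"
  shows "v \<noteq> troot (T a)"
proof
  assume v: "v = troot (T a)"
  have "rooted_tree (T a)" using btb_ext[OF assms(1,2)] unfolding extended_tree_def by auto
  then have "v \<in> tverts (T a)" using v unfolding rooted_tree_def by auto
  then have "v \<in> tleaves (T a)" using btb_shared[OF assms(1,2,3,4)] assms(5) by auto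
  then show False using v unfolding tleaves_def by auto
qed

lemma rt: "btb_graph m T \<Longrightarrow> i < m \<Longrightarrow> rooted_tree (T i)"
  using btb_ext unfolding extended_tree_def by auto

lemma adj_sym: "adjacent m T i j \<Longrightarrow> adjacent m T j i"
  unfolding adjacent_def by auto

lemma cleaf_sym: "cleaf T i j = cleaf T j i"
  unfolding cleaf_def by (simp add: conj_commute)

lemma Pvars_sym: "Pvars T i j = Pvars T j i"
  unfolding Pvars_def cleaf_sym[of T i j] by auto

lemma cleaf_leaf:
  assumes g: "btb_graph m T" and a: "adjacent m T i j"
  shows "cleaf T i j \<in> tleaves (T i) \<and> cleaf T i j \<in> tleaves (T j)"
proof -
  obtain l where l: "l \<in> tleaves (T i)" "l \<in> tleaves (T j)" using a unfolding adjacent_def by auto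
  have ij: "i < m" "j < m" "i \<noteq> j" using a unfolding adjacent_def by auto
  have fin: "finite (tverts (T i) \<inter> tverts (T j))" using rt[OF g ij(1)] unfolding rooted_tree_def by blast
  have c: "card (tverts (T i) \<inter> tverts (T j)) \<le> 1" using btb_card1[OF g ij] .
  have uniq: "l' = l" if "l' \<in> tleaves (T i)" "l' \<in> tleaves (T j)" for l'
  proof (rule ccontr)
    assume ne: "l' \<noteq> l"
    have "{l, l'} \<subseteq> tverts (T i) \<inter> tverts (T j)" using that l unfolding tleaves_def by blast
    then have "card {l, l'} \<le> card (tverts (T i) \<inter> tverts (T j))" by (rule card_mono[OF fin])
    then have "card {l, l'} \<le> 1" using c by linarith
    then show False using ne by simp
  qed
  have "cleaf T i j = l" unfolding cleaf_def
  proof (rule the_equality)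
    show "l \<in> tleaves (T i) \<and> l \<in> tleaves (T j)" using l by simp
  next
    fix l' assume "l' \<in> tleaves (T i) \<and> l' \<in> tleaves (T j)"
    then show "l' = l" using uniq by simp
  qed
  then show ?thesis using l by simp
qed

lemma Pvars_sub:
  assumes g: "btb_graph m T" and a: "adjacent m T i j"
  shows "Pvars T i j \<subseteq> tverts (T i) \<union> tverts (T j)"
proof -
  have ij: "i < m" "j < m" using a unfolding adjacent_def by auto
  have "cleaf T i j \<in> tverts (T i)" "cleaf T i j \<in> tverts (T j)"
    using cleaf_leaf[OF g a] unfolding tleaves_def by auto
  then show ?thesis unfolding Pvars_def using rpath_sub[OF rt[OF g ij(1)]] rpath_sub[OF rt[OF g ij(2)]]
    by (meson Un_mono)
qed

lemma sib_internal:
  assumes g: "btb_graph m T" and i: "i < m" and s: "tsiblings (T i) x y"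
  shows "is_internal m T x"
proof -
  have xv: "x \<in> tverts (T i)" "x \<noteq> troot (T i)" using s unfolding tsiblings_def by auto
  have ext: "extended_tree (T i)" using btb_ext[OF g i] .
  have "x \<in> HV m T" unfolding HV_def using xv i by auto
  moreover have "\<not> is_root m T x"
  proof
    assume "is_root m T x"
    then obtain a where a: "a < m" "x = troot (T a)" unfolding is_root_def by blast
    show False
    proof (cases "a = i")
      case True then show False using a xv by simp
    next
      case False then show False using G1[OF g a(1) i False xv(1)] a by simp
    qed
  qed
  moreover have "\<not> is_leaf m T x"
  proof
    assume "is_leaf m T x"
    then obtain a where a: "a < m" "x \<in> tleaves (T a)" unfolding is_leaf_def by auto
    have "x \<in> tleaves (T i)"
    proof (cases "a = i")
      case True then show ?thesis using a by simp
    next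
      case False
      have "x \<in> tverts (T a)" using a unfolding tleaves_def by auto
      then show ?thesis using btb_shared[OF g a(1) i False] xv(1) by auto
    qed
    then show False using ext s unfolding extended_tree_def by auto
  qed
  ultimately show ?thesis unfolding is_internal_def by auto
qed

lemma core:
  assumes g: "btb_graph m T" and aij: "adjacent m T i j" and aik: "adjacent m T i k"
    and r: "respects_pe m T S {troot (T i), troot (T k)}"
    and sub: "S \<subseteq> S'" and cS': "consistent S'"
    and lt: "(cleaf T i j, True) \<in> S'"
    and oth: "\<forall>v\<in>Pvars T i j - {cleaf T i j}. (v, False) \<in> S'"
  shows False
proof -
  have ij: "i < m" "j < m" "i \<noteq> j" "k < m" "i \<noteq> k" using aij aik unfolding adjacent_def by auto
  have R1: "\<forall>v \<in> Pvars T i k. \<not> is_root m T v \<longrightarrow> (v, False) \<in> S"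
    and R2: "\<forall>v \<in> Pvars T i k. is_internal m T v \<longrightarrow> (\<forall>u. siblings m T u v \<longrightarrow> (u, True) \<in> S)"
    using r aik unfolding respects_pe_def by blast+
  have ext: "extended_tree (T i)" using btb_ext[OF g ij(1)] .
  have rti: "rooted_tree (T i)" using rt g ij by auto
  let ?l1 = "cleaf T i j" and ?l2 = "cleaf T i k"
  have l1: "?l1 \<in> tleaves (T i)" "?l1 \<in> tleaves (T j)" using cleaf_leaf[OF g aij] by auto
  have l2: "?l2 \<in> tleaves (T i)" "?l2 \<in> tleaves (T k)" using cleaf_leaf[OF g aik] by auto
  show False
  proof (cases "k = j")
    case True
    have "?l1 \<in> Pvars T i k" unfolding Pvars_def using True self_in_rpath by auto
    moreover have "\<not> is_root m T ?l1"
    proof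
      assume "is_root m T ?l1"
      then obtain a where a: "a < m" "?l1 = troot (T a)" unfolding is_root_def by auto
      have l1v: "?l1 \<in> tverts (T i)" using l1 unfolding tleaves_def by auto
      show False
      proof (cases "a = i")
        case True then show False using a l1 unfolding tleaves_def by auto
      next
        case False then show False using G1[OF g a(1) ij(1) False l1v] a by auto
      qed
    qed
    ultimately have "(?l1, False) \<in> S" using R1 by auto
    then show False using sub lt cS' unfolding consistent_def by auto
  next
    case False
    have ne: "?l1 \<noteq> ?l2"
    proof
      assume e: "?l1 = ?l2"
      have "{i, j, k} \<subseteq> {a. a < m \<and> ?l1 \<in> tleaves (T a)}" using l1 l2 e ij by auto
      moreover have "finite {a. a < m \<and> ?l1 \<in> tleaves (T a)}" by auto
      ultimately have "card {i, j, k} \<le> card {a. a < m \<and> ?l1 \<in> tleaves (T a)}" by (rule card_mono[rotated])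
      moreover have "card {a. a < m \<and> ?l1 \<in> tleaves (T a)} = 2" using btb_card2[OF g ij(1) l1(1)] .
      moreover have "card {i, j, k} = 3" using ij False by auto
      ultimately show False by simp
    qed
    obtain x y where x: "x \<in> rpath (T i) ?l1" and y: "y \<in> rpath (T i) ?l2" and s: "tsiblings (T i) x y"
      using diverge[OF rti l1(1) l2(1) ne] by blast
    have s': "tsiblings (T i) y x" using s unfolding tsiblings_def by auto
    have sib: "siblings m T x y" unfolding siblings_def
      using sib_internal[OF g ij(1) s] sib_internal[OF g ij(1) s'] s ij(1) by blast
    have "y \<in> Pvars T i k" using y unfolding Pvars_def by auto
    then have "(x, True) \<in> S" using R2 sib sib_internal[OF g ij(1) s'] by blast
    moreover have "x \<noteq> ?l1" using ext l1(1) s unfolding extended_tree_def by auto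
    moreover have "x \<in> Pvars T i j" using x unfolding Pvars_def by auto
    ultimately show False using oth sub cS' unfolding consistent_def by blast
  qed
qed

theorem lemma12:
  fixes m :: nat and T :: "nat \<Rightarrow> 'v rtree" and M :: "'v set set" and S :: "'v lit set"
  assumes "btb_graph m T"
    and "pseudomatching m T M"
    and "consistent S"
    and "Vars S = HV m T - \<Union>M"
    and "comfortable1 m T M S"
  shows "\<forall>S' \<in> EC m T S. Pr m T {S'} = (1/2) ^ card (HV m T - Vars (Fix m T S))"
proof
  fix S' assume "S' \<in> EC m T S"
  then have sub: "S \<subseteq> S'" and sat: "S' \<in> SAT m T" unfolding EC_def by auto
  have cS': "consistent S'" using sat unfolding SAT_def by auto
  have g: "btb_graph m T" using assms by simp
  have allin: "\<forall>v\<in>Pvars T i j. v \<in> Vars S"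
    if a: "adjacent m T i j" and lt: "(cleaf T i j, True) \<in> S'"
       and oth: "\<forall>v\<in>Pvars T i j - {cleaf T i j}. (v, False) \<in> S'" for i j
  proof (rule ccontr)
    assume "\<not> (\<forall>v\<in>Pvars T i j. v \<in> Vars S)"
    then obtain v where v: "v \<in> Pvars T i j" "v \<notin> Vars S" by auto
    have ij: "i < m" "j < m" "i \<noteq> j" using a unfolding adjacent_def by auto
    have vij: "v \<in> tverts (T i) \<union> tverts (T j)" using Pvars_sub[OF g a] v by auto
    then have "v \<in> HV m T" unfolding HV_def using ij by auto
    then have "v \<in> \<Union>M" using v assms(4) by auto
    then obtain e where e: "e \<in> M" "v \<in> e" by auto
    then have "e \<in> pseudoedges m T" using assms(2) unfolding pseudomatching_def by auto
    then obtain a b where ab: "e = {troot (T a), troot (T b)}" "adjacent m T a b"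
      unfolding pseudoedges_def by auto
    have r: "respects_pe m T S e" using assms(5) e unfolding comfortable1_def by auto
    have vab: "v = troot (T a) \<or> v = troot (T b)" using ab e by auto
    obtain a' b' where ab': "e = {troot (T a'), troot (T b')}" "adjacent m T a' b'" "v = troot (T a')"
    proof (cases "v = troot (T a)")
      case True then show ?thesis using that ab by blast
    next
      case False then have "v = troot (T b)" using vab by blast
      moreover have "e = {troot (T b), troot (T a)}" using ab by auto
      ultimately show ?thesis using that adj_sym[OF ab(2)] by blast
    qed
    have am: "a' < m" using ab' unfolding adjacent_def by auto
    have rb: "respects_pe m T S {troot (T a'), troot (T b')}" using r ab' by simp
    show False
    proof (cases "v \<in> tverts (T i)")
      case True
      then have ai: "a' = i" using G1[OF g am ij(1)] ab'(3) by blast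
      have aib: "adjacent m T i b'" using ab'(2) ai by simp
      have ri: "respects_pe m T S {troot (T i), troot (T b')}" using rb ai by simp
      show False by (rule core[OF g a aib ri sub cS' lt oth])
    next
      case False
      then have vj: "v \<in> tverts (T j)" using vij by auto
      then have aj: "a' = j" using G1[OF g am ij(2)] ab'(3) by blast
      have ajb: "adjacent m T j b'" using ab'(2) aj by simp
      have rj: "respects_pe m T S {troot (T j), troot (T b')}" using rb aj by simp
      have c1: "cleaf T j i = cleaf T i j" by (rule cleaf_sym)
      have p1: "Pvars T j i = Pvars T i j" by (rule Pvars_sym)
      have lt': "(cleaf T j i, True) \<in> S'" using lt c1 by simp
      have oth': "\<forall>v\<in>Pvars T j i - {cleaf T j i}. (v, False) \<in> S'" using oth c1 p1 by simp
      show False by (rule core[OF g adj_sym[OF a] ajb rj sub cS' lt' oth'])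
    qed
  qed
  have "Fix m T S' = Fix m T S"
  proof
    show "Fix m T S \<subseteq> Fix m T S'" using sub unfolding Fix_def by blast
  next
    show "Fix m T S' \<subseteq> Fix m T S"
    proof
      fix z assume "z \<in> Fix m T S'"
      then obtain i j where z: "z = (cleaf T i j, True)" "adjacent m T i j"
        "(cleaf T i j, True) \<in> S'" "\<forall>v\<in>Pvars T i j - {cleaf T i j}. (v, False) \<in> S'"
        unfolding Fix_def by blast
      have ai: "\<forall>v\<in>Pvars T i j. v \<in> Vars S" using allin z by blast
      have trans: "(v, bb) \<in> S" if "v \<in> Pvars T i j" "(v, bb) \<in> S'" for v bb
      proof -
        have "v \<in> fst ` S" using ai that(1) unfolding Vars_def by blast
        then obtain p where p: "p \<in> S" "v = fst p" by blast
        then have vS: "(v, snd p) \<in> S" by simp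
        then have "(v, snd p) \<in> S'" using sub by blast
        then have "snd p = bb" using that(2) cS' unfolding consistent_def
          by (cases "snd p"; cases bb) auto
        then show ?thesis using vS by simp
      qed
      have "cleaf T i j \<in> Pvars T i j" unfolding Pvars_def using self_in_rpath by auto
      then have "(cleaf T i j, True) \<in> S" using trans z(3) by auto
      moreover have "\<forall>v\<in>Pvars T i j - {cleaf T i j}. (v, False) \<in> S" using trans z(4) by auto
      ultimately show "z \<in> Fix m T S" unfolding Fix_def using z(1,2) by blast
    qed
  qed
  show "Pr m T {S'} = (1/2) ^ card (HV m T - Vars (Fix m T S))"
  proof -
    have "{S'} \<inter> SAT m T = {S'}" using sat by auto
    then show ?thesis unfolding Pr_def weight_def using \<open>Fix m T S' = Fix m T S\<close> by simp
  qed
qed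

end
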